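(* Let $X\subset\mathbb{P}^5$ be a smooth cubic fourfold over $\mathbb{C}$ containing an elliptic ruled surface $T$ of degree $6$, let $H$ be the hyperplane class of $X$, and let $S\in H^{2,2}(X,\mathbb{Z})$ be the class of a sextic del Pezzo surface as described in the context (so $H^2\cdot S=6$ and $S^2=18$). Let $c\in\{1,2\}$ and assume there is a class $\Sigma\in H^{2,2}(X,\mathbb{Z})$ with $\Sigma\cdot S=c$. Then one can choose $\Sigma\in H^{2,2}(X,\mathbb{Z})$ with $\Sigma\cdot S=c$ such that, for some integer $k$, the intersection matrix of the sublattice $\langle H^2,S,\Sigma\rangle$ (with respect to the ordered basis $H^2,S,\Sigma$) is one of \[\begin{pmatrix}3&6&0\\6&18&c\\0&c&2k\end{pmatrix},\qquad \begin{pmatrix}3&6&1\\6&18&c\\1&c&2k+1\end{pmatrix},\qquad \begin{pmatrix}3&6&2\\6&18&c\\2&c&2k\end{pmatrix}.\] In these three cases one has $\mathrm{disc}\langle H^2,S,\Sigma\rangle = 36k-3c^2$, $36k-3c^2+12c$, and $36k-3c^2+24c-72$ respectively.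
   Context: Let $p:\tilde X\to X$ be the blow-up of $X$ along $T$; then $\tilde X$ admits a del Pezzo fibration $\pi:\tilde X\to\mathbb{P}^2$ whose general fibres are sextic del Pezzo surfaces. Let $F\in H^4(\tilde X,\mathbb{Z})$ be the class of a fibre of $\pi$ and $S:=p_*F\in H^{2,2}(X,\mathbb{Z})$. The intersection form on $H^4(X,\mathbb{Z})$ is the cup product pairing; $\mathrm{disc}$ of a lattice denotes the determinant of its intersection matrix. *)

theory Defs
  imports "HOL-Analysis.Analysis"
begin

text \<open>Lattice-theoretic model of the middle cohomology H^4(X,Z) of a smooth cubic
fourfold X: an abelian group with a symmetric Z-bilinear form (cup product),
the square of the hyperplane class h2, and the subgroup of Hodge classes.\<close>

definition sym_bilinear :: "('a::ab_group_add \<Rightarrow> 'a \<Rightarrow> int) \<Rightarrow> bool" where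
  "sym_bilinear B \<longleftrightarrow> (\<forall>x y. B x y = B y x) \<and> (\<forall>x y z. B (x + y) z = B x z + B y z)"

definition subgroup_of :: "'a::ab_group_add set \<Rightarrow> bool" where
  "subgroup_of M \<longleftrightarrow> 0 \<in> M \<and> (\<forall>x\<in>M. \<forall>y\<in>M. x + y \<in> M) \<and> (\<forall>x\<in>M. - x \<in> M)"

definition gram3 :: "('a \<Rightarrow> 'a \<Rightarrow> int) \<Rightarrow> 'a \<Rightarrow> 'a \<Rightarrow> 'a \<Rightarrow> int^3^3" where
  "gram3 B x y z = (let v = (\<lambda>i::3. if i = 1 then x else if i = 2 then y else z)
                    in (\<chi> i j. B (v i) (v j)))"

end

theory Submission
  imports Defs
begin

definition zmul :: "int \<Rightarrow> 'a::ab_group_add \<Rightarrow> 'a" where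
  "zmul n x = (if n \<ge> 0 then (((+) x) ^^ nat n) 0 else - ((((+) x) ^^ nat (-n)) 0))"

lemma bil_basic:
  assumes "sym_bilinear B"
  shows "B (x + y) z = B x z + B y z" "B z (x + y) = B z x + B z y"
    "B 0 z = 0" "B z 0 = 0" "B (- x) z = - B x z" "B z (- x) = - B z x"
    "B (x - y) z = B x z - B y z" "B z (x - y) = B z x - B z y"
proof -
  have s: "\<And>x y. B x y = B y x" and a: "\<And>x y z. B (x + y) z = B x z + B y z"
    using assms unfolding sym_bilinear_def by auto
  show 1: "B (x + y) z = B x z + B y z" by (rule a)
  show 2: "B z (x + y) = B z x + B z y" using a s by metis
  have z: "\<And>z. B 0 z = 0" using a[of 0 0] by simp
  show "B 0 z = 0" by (rule z)
  show "B z 0 = 0" using z s by metis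
  have n: "\<And>x z. B (- x) z = - B x z" using a z by (metis add.right_inverse add_eq_0_iff)
  show "B (- x) z = - B x z" by (rule n)
  show "B z (- x) = - B z x" using n s by metis
  show "B (x - y) z = B x z - B y z" using a n by (metis diff_conv_add_uminus)
  show "B z (x - y) = B z x - B z y" using a n s by (metis diff_conv_add_uminus)
qed

lemma zmul_nat:
  fixes x :: "'a::ab_group_add" and n :: nat
  assumes "sym_bilinear B"
  shows "B ((((+) x) ^^ n) 0) z = int n * B x z"
  using bil_basic[OF assms] by (induction n) (auto simp: algebra_simps)

lemma zmul_B: "sym_bilinear B \<Longrightarrow> B (zmul n x) z = n * B x z"
  using zmul_nat[where B=B] bil_basic[of B] by (auto simp: zmul_def)

lemma zmul_B2: "sym_bilinear B \<Longrightarrow> B z (zmul n x) = n * B z x"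
  by (metis zmul_B sym_bilinear_def)

lemma zmul_H_nat: "subgroup_of H \<Longrightarrow> x \<in> H \<Longrightarrow> ((+) x ^^ n) 0 \<in> H"
  by (induction n) (auto simp: subgroup_of_def)

lemma zmul_H: "subgroup_of H \<Longrightarrow> x \<in> H \<Longrightarrow> zmul n x \<in> H"
  using zmul_H_nat[of H x] by (auto simp: zmul_def subgroup_of_def)

lemma sub_H: "subgroup_of H \<Longrightarrow> x \<in> H \<Longrightarrow> y \<in> H \<Longrightarrow> x + y \<in> H"
  by (auto simp: subgroup_of_def)

lemma gram_eq:
  assumes "sym_bilinear B" "B h h = p11" "B h S = p12" "B h T = p13" "B S S = p22" "B S T = p23" "B T T = p33"
  shows "gram3 B h S T = vector [vector [p11, p12, p13], vector [p12, p22, p23], vector [p13, p23, p33]]"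
proof -
  have s: "\<And>x y. B x y = B y x" using assms(1) unfolding sym_bilinear_def by auto
  show ?thesis unfolding gram3_def Let_def using assms(2-)
    by (simp add: vec_eq_iff forall_3 s)
qed

theorem lemma2p4:
  fixes B :: "'a::ab_group_add \<Rightarrow> 'a \<Rightarrow> int"
    and Hdg :: "'a set" and h2 S :: 'a and c :: int
  assumes bil: "sym_bilinear B"
    and h2_char: "\<forall>x. B x h2 = 0 \<longrightarrow> even (B x x)"
    and Hdg: "subgroup_of Hdg" "h2 \<in> Hdg" "S \<in> Hdg"
    and h2h2: "B h2 h2 = 3" and h2S: "B h2 S = 6" and SS: "B S S = 18"
    and c: "c \<in> {1, 2}"
    and ex: "\<exists>\<Sigma>\<in>Hdg. B \<Sigma> S = c"
  shows "\<exists>\<Sigma>\<in>Hdg. B \<Sigma> S = c \<and> (\<exists>k::int.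
     (gram3 B h2 S \<Sigma> = vector [vector [3, 6, 0], vector [6, 18, c], vector [0, c, 2*k]]
        \<and> det (gram3 B h2 S \<Sigma>) = 36*k - 3*c^2)
   \<or> (gram3 B h2 S \<Sigma> = vector [vector [3, 6, 1], vector [6, 18, c], vector [1, c, 2*k+1]]
        \<and> det (gram3 B h2 S \<Sigma>) = 36*k - 3*c^2 + 12*c)
   \<or> (gram3 B h2 S \<Sigma> = vector [vector [3, 6, 2], vector [6, 18, c], vector [2, c, 2*k]]
        \<and> det (gram3 B h2 S \<Sigma>) = 36*k - 3*c^2 + 24*c - 72))"
proof -
  note bb = bil_basic[OF bil]
  have sy: "\<And>x y. B x y = B y x" using bil unfolding sym_bilinear_def by auto
  obtain S0 where S0: "S0 \<in> Hdg" "B S0 S = c" using ex by auto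
  define a where "a = B S0 h2"
  define v where "v = zmul 3 h2"
  define S1 where "S1 = S0 + zmul (a div 3) (S + - v)"
  have vH: "- v \<in> Hdg" unfolding v_def using zmul_H[OF Hdg(1) Hdg(2)] Hdg(1)
    by (auto simp: subgroup_of_def)
  have S1H: "S1 \<in> Hdg" unfolding S1_def
    by (intro sub_H[OF Hdg(1)] S0 zmul_H[OF Hdg(1)] Hdg vH)
  have vS: "B v S = 18" "B v h2 = 9" unfolding v_def using zmul_B[OF bil] h2S h2h2 by auto
  have S1S: "B S1 S = c" unfolding S1_def using bb S0 zmul_B[OF bil] vS SS by simp
  define t where "t = a mod 3"
  have "B S1 h2 = a + (a div 3) * (B S h2 - B v h2)" unfolding S1_def
    using bb zmul_B[OF bil] a_def by simp
  also have "\<dots> = a - 3 * (a div 3)" using vS h2S sy by simp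
  also have "\<dots> = t" unfolding t_def by (metis minus_div_mult_eq_mod mult.commute)
  finally have S1h: "B S1 h2 = t" .
  define s where "s = B S1 S1"
  define x where "x = zmul 3 S1 + zmul (- t) h2"
  have "B x h2 = 0" unfolding x_def using bb zmul_B[OF bil] S1h h2h2 by simp
  hence ev: "even (B x x)" using h2_char by auto
  have "B x x = 9 * s - 6 * t * t + 3 * t * t"
    unfolding x_def s_def using S1h h2h2
    by (simp add: bb zmul_B[OF bil] zmul_B2[OF bil] sy[of h2 S1] algebra_simps)
  with ev have par: "even (s + t)" by (auto simp: algebra_simps)
  have t3: "t \<in> {0,1,2}" unfolding t_def by auto
  have cc: "c = 1 \<or> c = 2" using c by auto
  show ?thesis
  proof (intro bexI[OF _ S1H] conjI S1S)
    have G: "gram3 B h2 S S1 = vector [vector [3, 6, t], vector [6, 18, c], vector [t, c, s]]"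
      using gram_eq[OF bil h2h2 h2S _ SS _ s_def[symmetric]] S1h S1S sy by metis
    consider "t = 0" | "t = 1" | "t = 2" using t3 by auto
    then show "\<exists>k::int.
     (gram3 B h2 S S1 = vector [vector [3, 6, 0], vector [6, 18, c], vector [0, c, 2*k]]
        \<and> det (gram3 B h2 S S1) = 36*k - 3*c^2)
   \<or> (gram3 B h2 S S1 = vector [vector [3, 6, 1], vector [6, 18, c], vector [1, c, 2*k+1]]
        \<and> det (gram3 B h2 S S1) = 36*k - 3*c^2 + 12*c)
   \<or> (gram3 B h2 S S1 = vector [vector [3, 6, 2], vector [6, 18, c], vector [2, c, 2*k]]
        \<and> det (gram3 B h2 S S1) = 36*k - 3*c^2 + 24*c - 72)"
    proof cases
      case 1
      then obtain k where k: "s = 2*k" using par by auto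
      show ?thesis by (rule exI[of _ k]) (simp add: G 1 k det_3 power2_eq_square algebra_simps)
    next
      case 2
      then obtain k where k: "s = 2*k+1" using par by (metis oddE even_add odd_one)
      show ?thesis by (rule exI[of _ k]) (simp add: G 2 k det_3 power2_eq_square algebra_simps)
    next
      case 3
      then obtain k where k: "s = 2*k" using par by auto
      show ?thesis by (rule exI[of _ k]) (simp add: G 3 k det_3 power2_eq_square algebra_simps)
    qed
  qed
qed

end
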